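(* Consider the distributed quantized weight-balancing algorithm described in the context on a strongly connected digraph with $N$ nodes, with step-size $\gamma(k)=2^{-n}$ for $2^n-1\le k\le 2^{n+1}-2$. For every $k\in\mathbb{Z}_+$ there exists $k_1\ge k$ such that $\Vert\boldsymbol{\epsilon}(k_1)\Vert_1<2N(N-1)\gamma(k_1)$.
   Context: $\mathcal{G}=(\mathcal{V},\mathcal{E})$, $\mathcal{V}=\{1,\dots,N\}$, no self-loops; $\mathcal{N}_i^-=\{j:(j,i)\in\mathcal{E}\}$, $\mathcal{N}_i^+=\{j:(i,j)\in\mathcal{E}\}$, $d_i^+=|\mathcal{N}_i^+|$. Algorithm: $a_{ij}(0)=1$ if $j\in\mathcal{N}_i^-$ and $0$ otherwise; $b_i(k)=\sum_{j\in\mathcal{N}_i^-}a_{ij}(k)-\sum_{j\in\mathcal{N}_i^+}a_{ji}(k)$; $n_i(k)=1$ if $b_i(k)\ge d_i^+\gamma(k)$, else $0$; $a_{ij}(k+1)=a_{ij}(k)+n_j(k)\gamma(k)$ for $j\in\mathcal{N}_i^-$. $\boldsymbol{\epsilon}(k)=(|b_i(k)|)_{i=1}^N$. *)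

theory Defs
  imports Complex_Main
begin

text \<open>Digraph on vertices {1..N}: an edge (j,i) goes from j to i.\<close>

definition in_nbrs :: "(nat \<times> nat) set \<Rightarrow> nat \<Rightarrow> nat set" where
  "in_nbrs E i = {j. (j, i) \<in> E}"

definition out_nbrs :: "(nat \<times> nat) set \<Rightarrow> nat \<Rightarrow> nat set" where
  "out_nbrs E i = {j. (i, j) \<in> E}"

definition out_deg :: "(nat \<times> nat) set \<Rightarrow> nat \<Rightarrow> nat" where
  "out_deg E i = card (out_nbrs E i)"

definition gamma :: "nat \<Rightarrow> real" where
  "gamma k = 1 / 2 ^ (THE n. 2 ^ n - 1 \<le> k \<and> k \<le> 2 ^ (n + 1) - 2)"

text \<open>Weight imbalance b_i for a weight assignment a (a i j = weight of edge (j,i)).\<close>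
definition bal :: "(nat \<times> nat) set \<Rightarrow> (nat \<Rightarrow> nat \<Rightarrow> real) \<Rightarrow> nat \<Rightarrow> real" where
  "bal E a i = (\<Sum>j\<in>in_nbrs E i. a i j) - (\<Sum>j\<in>out_nbrs E i. a j i)"

primrec wts :: "(nat \<times> nat) set \<Rightarrow> nat \<Rightarrow> nat \<Rightarrow> nat \<Rightarrow> real" where
  "wts E 0 = (\<lambda>i j. if (j, i) \<in> E then 1 else 0)"
| "wts E (Suc k) =
     (\<lambda>i j. if (j, i) \<in> E
            then wts E k i j
                 + (if bal E (wts E k) j \<ge> real (out_deg E j) * gamma k then gamma k else 0)
            else wts E k i j)"

definition flag :: "(nat \<times> nat) set \<Rightarrow> nat \<Rightarrow> nat \<Rightarrow> nat" where
  "flag E k i = (if bal E (wts E k) i \<ge> real (out_deg E i) * gamma k then 1 else 0)"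

definition b :: "(nat \<times> nat) set \<Rightarrow> nat \<Rightarrow> nat \<Rightarrow> real" where
  "b E k i = bal E (wts E k) i"

definition eps_norm1 :: "nat \<Rightarrow> (nat \<times> nat) set \<Rightarrow> nat \<Rightarrow> real" where
  "eps_norm1 N E k = (\<Sum>i\<in>{1..N}. \<bar>b E k i\<bar>)"

definition strongly_connected :: "nat \<Rightarrow> (nat \<times> nat) set \<Rightarrow> bool" where
  "strongly_connected N E \<longleftrightarrow> (\<forall>i\<in>{1..N}. \<forall>j\<in>{1..N}. (i, j) \<in> E\<^sup>*)"

end

theory Submission
  imports Defs
begin


definition ex :: "nat \<Rightarrow> nat" where
  "ex k = (THE n. 2 ^ n - 1 \<le> k \<and> k \<le> 2 ^ (n + 1) - 2)"

lemma cond_aux: "(1::nat) \<le> p \<Longrightarrow> (p - 1 \<le> k \<and> k \<le> 2 * p - 2) \<longleftrightarrow> p \<le> Suc k \<and> Suc k < 2 * p"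
  by arith

lemma cond_iff: "(2 ^ n - 1 \<le> k \<and> k \<le> 2 ^ (n + 1) - 2) \<longleftrightarrow> (2::nat) ^ n \<le> Suc k \<and> Suc k < 2 ^ Suc n"
  using cond_aux[of "2 ^ n" k] by simp

lemma exists_exp: "\<exists>n. (2::nat) ^ n \<le> Suc k \<and> Suc k < 2 ^ Suc n"
proof (induction k)
  case 0
  then show ?case by (intro exI[of _ 0]) auto
next
  case (Suc k)
  then obtain n where n: "(2::nat) ^ n \<le> Suc k" "Suc k < 2 ^ Suc n" by blast
  show ?case
  proof (cases "Suc (Suc k) < 2 ^ Suc n")
    case True
    then show ?thesis using n by (intro exI[of _ n]) auto
  next
    case False
    then have "Suc (Suc k) = 2 ^ Suc n" using n by auto
    then show ?thesis by (intro exI[of _ "Suc n"]) auto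
  qed
qed

lemma unique_exp:
  assumes "(2::nat) ^ n \<le> Suc k" "Suc k < 2 ^ Suc n" "(2::nat) ^ m \<le> Suc k" "Suc k < 2 ^ Suc m"
  shows "n = m"
proof (rule ccontr)
  assume "n \<noteq> m"
  then consider "Suc n \<le> m" | "Suc m \<le> n" by linarith
  then show False
  proof cases
    case 1
    then have "(2::nat) ^ Suc n \<le> 2 ^ m" by (rule power_increasing) simp
    then show False using assms by linarith
  next
    case 2
    then have "(2::nat) ^ Suc m \<le> 2 ^ n" by (rule power_increasing) simp
    then show False using assms by linarith
  qed
qed

lemma ex_char:
  assumes "(2::nat) ^ n \<le> Suc k" "Suc k < 2 ^ Suc n"
  shows "ex k = n"
  unfolding ex_def cond_iff
  by (rule the_equality) (use assms unique_exp in auto)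

lemma ex_prop: "(2::nat) ^ ex k \<le> Suc k \<and> Suc k < 2 ^ Suc (ex k)"
proof -
  obtain n where "(2::nat) ^ n \<le> Suc k" "Suc k < 2 ^ Suc n" using exists_exp by blast
  then show ?thesis using ex_char by auto
qed


lemma gamma_ex: "gamma k = 1 / 2 ^ ex k"
  unfolding gamma_def ex_def by simp

lemma gamma_pos: "gamma k > 0" by (simp add: gamma_ex)

lemma ex_mono: "ex k \<le> ex (Suc k)"
proof -
  have "(2::nat) ^ ex k < 2 ^ Suc (ex (Suc k))" using ex_prop[of k] ex_prop[of "Suc k"] by linarith
  then have "ex k < Suc (ex (Suc k))" by (rule power_less_imp_less_exp[rotated]) simp
  then show ?thesis by simp
qed

lemma ex_mono': "k \<le> k' \<Longrightarrow> ex k \<le> ex k'"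
proof (induction k' rule: dec_induct)
  case base
  then show ?case by simp
next
  case (step m)
  then show ?case using ex_mono[of m] by linarith
qed

lemma gamma_block: "2 ^ n - 1 \<le> k \<Longrightarrow> k < 2 ^ Suc n - 1 \<Longrightarrow> gamma k = 1 / 2 ^ n"
proof -
  assume a: "2 ^ n - 1 \<le> k" "k < 2 ^ Suc n - 1"
  have "(1::nat) \<le> 2 ^ n" by simp
  then have "(2::nat) ^ n \<le> Suc k" "Suc k < 2 ^ Suc n" using a by auto
  then show ?thesis using ex_char gamma_ex by simp
qed

definition Q :: "real \<Rightarrow> nat \<Rightarrow> bool" where
  "Q x n \<longleftrightarrow> (\<exists>z::int. x = z / 2 ^ n)"

lemma Q_mono: "Q x n \<Longrightarrow> n \<le> m \<Longrightarrow> Q x m"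
proof -
  assume "Q x n" "n \<le> m"
  then obtain z :: int where z: "x = z / 2 ^ n" unfolding Q_def by blast
  have "(2::real) ^ m = 2 ^ n * 2 ^ (m - n)" using \<open>n \<le> m\<close> by (simp add: power_add[symmetric])
  then have "x = (z * 2 ^ (m - n)) / 2 ^ m" using z by simp
  then show "Q x m" unfolding Q_def by (intro exI[of _ "z * 2 ^ (m - n)"]) simp
qed

lemma Q_add: "Q x n \<Longrightarrow> Q y n \<Longrightarrow> Q (x + y) n"
proof -
  assume "Q x n" "Q y n"
  then obtain z1 z2 :: int where "x = z1 / 2 ^ n" "y = z2 / 2 ^ n" unfolding Q_def by blast
  then have "x + y = (z1 + z2) / 2 ^ n" by (simp add: add_divide_distrib)
  then show ?thesis unfolding Q_def by blast
qed

lemma Q_diff: "Q x n \<Longrightarrow> Q y n \<Longrightarrow> Q (x - y) n"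
proof -
  assume "Q x n" "Q y n"
  then obtain z1 z2 :: int where "x = z1 / 2 ^ n" "y = z2 / 2 ^ n" unfolding Q_def by blast
  then have "x - y = (z1 - z2) / 2 ^ n" by (simp add: diff_divide_distrib)
  then show ?thesis unfolding Q_def by blast
qed

lemma Q_0: "Q 0 n" unfolding Q_def by (intro exI[of _ 0]) simp

lemma Q_1: "Q 1 n" unfolding Q_def by (intro exI[of _ "2 ^ n"]) simp

lemma Q_gamma: "Q (gamma k) (ex k)" unfolding Q_def gamma_ex by (intro exI[of _ 1]) simp

lemma Q_sum: "(\<And>x. x \<in> A \<Longrightarrow> Q (f x) n) \<Longrightarrow> Q (sum f A) n"
  by (induction A rule: infinite_finite_induct) (auto simp: Q_0 Q_add)

lemma Q_neg: "Q x n \<Longrightarrow> x < 0 \<Longrightarrow> x \<le> - 1 / 2 ^ n"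
proof -
  assume "Q x n" "x < 0"
  then obtain z :: int where z: "x = z / 2 ^ n" unfolding Q_def by blast
  then have "z < 0" using \<open>x < 0\<close> by (simp add: divide_less_0_iff)
  then have "real_of_int z \<le> -1" by simp
  then have "real_of_int z / 2 ^ n \<le> -1 / 2 ^ n" by (rule divide_right_mono) simp
  then show ?thesis using z by simp
qed

lemma Q_wts: "Q (wts E k i j) (ex k)"
proof (induction k arbitrary: i j)
  case 0
  then show ?case by (simp add: Q_0 Q_1)
next
  case (Suc k)
  have g: "Q (gamma k) (ex (Suc k))" by (rule Q_mono[OF Q_gamma ex_mono])
  have w: "Q (wts E k i' j') (ex (Suc k))" for i' j' by (rule Q_mono[OF Suc.IH ex_mono])
  show ?case by (simp add: Q_add Q_0 g w)
qed

lemma Q_b: "Q (b E k i) (ex k)"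
  unfolding b_def bal_def by (intro Q_diff Q_sum Q_wts)

lemma b_neg: "b E k i < 0 \<Longrightarrow> b E k i \<le> - gamma k"
  using Q_neg[OF Q_b] by (simp add: gamma_ex)



locale wb =
  fixes N :: nat and E :: "(nat \<times> nat) set"
  assumes N2: "N \<ge> 2" and Esub: "E \<subseteq> {1..N} \<times> {1..N}"
    and irr: "\<forall>i. (i, i) \<notin> E" and sc: "strongly_connected N E"
begin

definition fire :: "nat \<Rightarrow> nat \<Rightarrow> bool" where
  "fire k i \<longleftrightarrow> real (out_deg E i) * gamma k \<le> b E k i"

definition Phi :: "nat \<Rightarrow> real" where
  "Phi k = (\<Sum>i\<in>{1..N}. max (- b E k i) 0)"

lemma in_sub: "in_nbrs E i \<subseteq> {1..N}" using Esub by (auto simp: in_nbrs_def)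
lemma out_sub: "out_nbrs E i \<subseteq> {1..N} - {i}" using Esub irr by (auto simp: out_nbrs_def)
lemma fin_in: "finite (in_nbrs E i)" using in_sub finite_subset by blast
lemma fin_out: "finite (out_nbrs E i)" using out_sub finite_subset by blast

lemma deg_le: "real (out_deg E i) \<le> real N - 1"
proof (cases "i \<in> {1..N}")
  case True
  have "card (out_nbrs E i) \<le> card ({1..N} - {i})" by (rule card_mono) (use out_sub in auto)
  also have "\<dots> \<le> N - 1" using True by (simp add: card_Diff_singleton_if)
  finally have "out_deg E i \<le> N - 1" unfolding out_deg_def .
  then show ?thesis using N2 by linarith
next
  case False
  then have "out_nbrs E i = {}" using Esub by (auto simp: out_nbrs_def)
  then show ?thesis using N2 by (simp add: out_deg_def)
qed

lemma b_Suc: "b E (Suc k) i = b E k i - (if fire k i then real (out_deg E i) * gamma k else 0)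
   + gamma k * real (card {j \<in> in_nbrs E i. fire k j})"
proof -
  have in1: "(\<Sum>j\<in>in_nbrs E i. wts E (Suc k) i j) = (\<Sum>j\<in>in_nbrs E i. wts E k i j + (if fire k j then gamma k else 0))"
    by (rule sum.cong) (auto simp: in_nbrs_def fire_def b_def)
  have out1: "(\<Sum>j\<in>out_nbrs E i. wts E (Suc k) j i) = (\<Sum>j\<in>out_nbrs E i. wts E k j i + (if fire k i then gamma k else 0))"
    by (rule sum.cong) (auto simp: out_nbrs_def fire_def b_def)
  have c1: "(\<Sum>j\<in>in_nbrs E i. (if fire k j then gamma k else 0)) = gamma k * real (card {j \<in> in_nbrs E i. fire k j})"
    using sum.inter_filter[where g="\<lambda>_. gamma k" and P="fire k" and A="in_nbrs E i", OF fin_in, symmetric] by simp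
  have c2: "(\<Sum>j\<in>out_nbrs E i. (if fire k i then gamma k else 0)) = (if fire k i then real (out_deg E i) * gamma k else 0)"
    by (simp add: out_deg_def)
  show ?thesis
    unfolding b_def bal_def in1 out1 sum.distrib c1 c2 by simp
qed

lemma in_filter: "in_nbrs E i = {j \<in> {1..N}. (j, i) \<in> E}" using Esub by (auto simp: in_nbrs_def)
lemma out_filter: "out_nbrs E i = {j \<in> {1..N}. (i, j) \<in> E}" using Esub by (auto simp: out_nbrs_def)

lemma bal_sum: "(\<Sum>i\<in>{1..N}. bal E a i) = 0"
proof -
  have 1: "(\<Sum>i\<in>{1..N}. \<Sum>j\<in>in_nbrs E i. a i j) = (\<Sum>i\<in>{1..N}. \<Sum>j\<in>{1..N}. if (j, i) \<in> E then a i j else 0)"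
    unfolding in_filter by (rule sum.cong[OF refl], rule sum.inter_filter, simp)
  have 2: "(\<Sum>i\<in>{1..N}. \<Sum>j\<in>out_nbrs E i. a j i) = (\<Sum>i\<in>{1..N}. \<Sum>j\<in>{1..N}. if (i, j) \<in> E then a j i else 0)"
    unfolding out_filter by (rule sum.cong[OF refl], rule sum.inter_filter, simp)
  also have "\<dots> = (\<Sum>j\<in>{1..N}. \<Sum>i\<in>{1..N}. if (i, j) \<in> E then a j i else 0)"
    by (rule sum.swap)
  finally show ?thesis unfolding bal_def sum_subtractf 1 by simp
qed

lemma b_sum: "(\<Sum>i\<in>{1..N}. b E k i) = 0"
  unfolding b_def by (rule bal_sum)

lemma eps_Phi: "eps_norm1 N E k = 2 * Phi k"
proof -
  have "eps_norm1 N E k = (\<Sum>i\<in>{1..N}. b E k i + 2 * max (- b E k i) 0)"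
    unfolding eps_norm1_def by (rule sum.cong) auto
  also have "\<dots> = 2 * Phi k" unfolding sum.distrib b_sum Phi_def sum_distrib_left by simp
  finally show ?thesis .
qed

lemma Phi_pos_part: "Phi k = (\<Sum>i\<in>{1..N}. max (b E k i) 0)"
proof -
  have "(\<Sum>i\<in>{1..N}. max (b E k i) 0) = (\<Sum>i\<in>{1..N}. b E k i + max (- b E k i) 0)"
    by (rule sum.cong) auto
  also have "\<dots> = Phi k" unfolding sum.distrib b_sum Phi_def by simp
  finally show ?thesis by simp
qed

lemma card_ge0: "0 \<le> gamma k * real (card {j \<in> in_nbrs E i. fire k j})"
  using gamma_pos[of k] by simp

lemma b_Suc_ge: "b E (Suc k) i \<ge> b E k i - (if fire k i then real (out_deg E i) * gamma k else 0)"
  using b_Suc[of k i] card_ge0[of k i] by linarith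

lemma nonneg_Suc: "b E k i \<ge> 0 \<Longrightarrow> b E (Suc k) i \<ge> 0"
  using b_Suc_ge[of k i] by (auto simp: fire_def split: if_splits)

lemma nonneg_stays: "k \<le> k' \<Longrightarrow> b E k i \<ge> 0 \<Longrightarrow> b E k' i \<ge> 0"
  by (induction k' rule: dec_induct) (auto intro: nonneg_Suc)

lemma term_mono: "max (- b E (Suc k) i) 0 \<le> max (- b E k i) 0"
proof (cases "fire k i")
  case True
  then have "b E (Suc k) i \<ge> 0" using b_Suc_ge[of k i] by (simp add: fire_def)
  then show ?thesis by simp
next
  case False
  then have "b E (Suc k) i \<ge> b E k i" using b_Suc_ge[of k i] by simp
  then show ?thesis by simp
qed

lemma Phi_Suc: "Phi (Suc k) \<le> Phi k"
  unfolding Phi_def by (rule sum_mono) (rule term_mono)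

lemma Phi_mono: "k \<le> k' \<Longrightarrow> Phi k' \<le> Phi k"
proof (induction k' rule: dec_induct)
  case base
  then show ?case by simp
next
  case (step m)
  then show ?case using Phi_Suc[of m] by linarith
qed

lemma not_fire_neg: "b E k i < 0 \<Longrightarrow> \<not> fire k i"
proof -
  assume a: "b E k i < 0"
  have "0 \<le> real (out_deg E i) * gamma k" using gamma_pos[of k] by simp
  then show ?thesis using a unfolding fire_def by linarith
qed

lemma receipt:
  assumes i: "i \<in> {1..N}" and neg: "b E k i < 0" and j: "j \<in> in_nbrs E i" and fj: "fire k j"
  shows "Phi (Suc k) \<le> Phi k - gamma k"
proof -
  have "j \<in> {j \<in> in_nbrs E i. fire k j}" using j fj by simp
  moreover have "finite {j \<in> in_nbrs E i. fire k j}" using fin_in[of i] by simp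
  ultimately have "card {j \<in> in_nbrs E i. fire k j} > 0" using card_gt_0_iff by blast
  then have "card {j \<in> in_nbrs E i. fire k j} \<ge> 1" by simp
  then have "gamma k * real (card {j \<in> in_nbrs E i. fire k j}) \<ge> gamma k"
    using gamma_pos[of k] by simp
  then have "b E (Suc k) i \<ge> b E k i + gamma k"
    using b_Suc[of k i] not_fire_neg[OF neg] by simp
  moreover have "b E k i \<le> - gamma k" using b_neg[OF neg] .
  moreover have "gamma k > 0" by (rule gamma_pos)
  ultimately have ti: "max (- b E (Suc k) i) 0 \<le> max (- b E k i) 0 - gamma k" by (auto simp: max_def)
  have rest: "(\<Sum>l\<in>{1..N} - {i}. max (- b E (Suc k) l) 0) \<le> (\<Sum>l\<in>{1..N} - {i}. max (- b E k l) 0)"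
    by (rule sum_mono) (rule term_mono)
  have "Phi (Suc k) = max (- b E (Suc k) i) 0 + (\<Sum>l\<in>{1..N} - {i}. max (- b E (Suc k) l) 0)"
    unfolding Phi_def using i by (simp add: sum.remove)
  moreover have "Phi k = max (- b E k i) 0 + (\<Sum>l\<in>{1..N} - {i}. max (- b E k l) 0)"
    unfolding Phi_def using i by (simp add: sum.remove)
  ultimately show ?thesis using ti rest by linarith
qed

definition big :: "nat \<Rightarrow> bool" where
  "big k \<longleftrightarrow> eps_norm1 N E k \<ge> 2 * real N * (real N - 1) * gamma k"

lemma big_fire: "big k \<Longrightarrow> \<exists>u\<in>{1..N}. fire k u"
proof (rule ccontr)
  assume bg: "big k" and nf: "\<not> (\<exists>u\<in>{1..N}. fire k u)"
  have pos: "0 < (real N - 1) * gamma k" using N2 gamma_pos[of k] by simp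
  have "\<forall>u\<in>{1..N}. max (b E k u) 0 < (real N - 1) * gamma k"
  proof
    fix u assume "u \<in> {1..N}"
    then have "b E k u < real (out_deg E u) * gamma k" using nf by (auto simp: fire_def not_le)
    also have "\<dots> \<le> (real N - 1) * gamma k"
      using deg_le[of u] gamma_pos[of k] by (simp add: mult_right_mono)
    finally show "max (b E k u) 0 < (real N - 1) * gamma k" using pos by simp
  qed
  then have "(\<Sum>u\<in>{1..N}. max (b E k u) 0) < (\<Sum>u\<in>{1..N}. (real N - 1) * gamma k)"
    using N2 by (intro sum_strict_mono) auto
  then have "Phi k < real N * ((real N - 1) * gamma k)" unfolding Phi_pos_part by simp
  then have "eps_norm1 N E k < 2 * real N * (real N - 1) * gamma k" unfolding eps_Phi by simp
  then show False using bg unfolding big_def by simp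
qed

lemma big_neg: "big k \<Longrightarrow> \<exists>w\<in>{1..N}. b E k w < 0"
proof (rule ccontr)
  assume bg: "big k" and nn: "\<not> (\<exists>w\<in>{1..N}. b E k w < 0)"
  then have "Phi k = 0" unfolding Phi_def by (intro sum.neutral) auto
  then have "eps_norm1 N E k = 0" unfolding eps_Phi by simp
  moreover have "0 < 2 * real N * (real N - 1) * gamma k" using N2 gamma_pos[of k] by simp
  ultimately show False using bg unfolding big_def by simp
qed

end


lemma card_step: "card {s \<in> {a..<a + Suc t}. P s} = card {s \<in> {a..<a + t}. P s} + (if P (a + t) then 1 else 0)"
proof -
  have "{s \<in> {a..<a + Suc t}. P s} = (if P (a + t) then insert (a + t) {s \<in> {a..<a + t}. P s} else {s \<in> {a..<a + t}. P s})"
    by (auto simp: less_Suc_eq)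
  then show ?thesis by simp
qed

lemma inv_count:
  fixes bv :: "nat \<Rightarrow> real" and fu fv :: "nat \<Rightarrow> bool" and d g :: real
  assumes g: "g > 0" and d: "d \<ge> 0"
    and fv: "\<And>s. a \<le> s \<Longrightarrow> s < a + T \<Longrightarrow> fv s \<longleftrightarrow> bv s \<ge> d * g"
    and rec: "\<And>s. a \<le> s \<Longrightarrow> s < a + T \<Longrightarrow> bv (Suc s) \<ge> bv s - (if fv s then d * g else 0) + (if fu s then g else 0)"
    and b0: "bv a \<ge> 0"
  shows "real (card {s \<in> {a..<a + T}. fu s}) \<le> d + 1 + (d + 2) * real (card {s \<in> {a..<a + T}. fv s})"
proof -
  define X where "X t = real (card {s \<in> {a..<a + t}. fu s})" for t
  define Y where "Y t = real (card {s \<in> {a..<a + t}. fv s})" for t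
  have main: "bv (a + t) \<ge> 0 \<and> g * X t \<le> min (bv (a + t)) (d * g) + (d + 2) * g * Y t + (if bv (a + t) \<ge> d * g then g else 0)"
    if "t \<le> T" for t
    using that
  proof (induction t)
    case 0
    then show ?case using b0 g d by (simp add: X_def Y_def)
  next
    case (Suc t)
    let ?s = "a + t"
    have IH: "bv ?s \<ge> 0" "g * X t \<le> min (bv ?s) (d * g) + (d + 2) * g * Y t + (if bv ?s \<ge> d * g then g else 0)"
      using Suc by auto
    have st: "a \<le> ?s" "?s < a + T" using Suc by auto
    have Xs: "X (Suc t) = X t + (if fu ?s then 1 else 0)" unfolding X_def card_step by simp
    have Ys: "Y (Suc t) = Y t + (if fv ?s then 1 else 0)" unfolding Y_def card_step by simp
    have r: "bv (Suc ?s) \<ge> bv ?s - (if fv ?s then d * g else 0) + (if fu ?s then g else 0)" using rec[OF st] .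
    have f: "fv ?s \<longleftrightarrow> bv ?s \<ge> d * g" using fv[OF st] .
    have dg: "d * g \<ge> 0" using d g by simp
    have gX: "g * X (Suc t) = g * X t + (if fu ?s then g else 0)" unfolding Xs by (simp add: algebra_simps)
    have e: "a + Suc t = Suc ?s" by simp
    show ?case
    proof (cases "bv ?s \<ge> d * g")
      case True
      then have fvs: "fv ?s" using f by simp
      have nn: "bv (Suc ?s) \<ge> 0" using r fvs True g by (auto split: if_splits)
      have gY: "(d + 2) * g * Y (Suc t) = (d + 2) * g * Y t + d * g + 2 * g"
        unfolding Ys using fvs by (simp add: algebra_simps)
      have "g * X (Suc t) \<le> d * g + (d + 2) * g * Y t + g + g"
        using IH(2) True gX g by (auto split: if_splits)
      also have "\<dots> = (d + 2) * g * Y (Suc t)" using gY by simp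
      also have "\<dots> \<le> min (bv (Suc ?s)) (d * g) + (d + 2) * g * Y (Suc t) + (if bv (Suc ?s) \<ge> d * g then g else 0)"
        using nn dg g by auto
      finally show ?thesis unfolding e using nn by simp
    next
      case False
      then have fvs: "\<not> fv ?s" using f by simp
      have r2: "bv (Suc ?s) \<ge> bv ?s + (if fu ?s then g else 0)" using r fvs by simp
      have nn: "bv (Suc ?s) \<ge> 0" using r2 IH(1) g by (auto split: if_splits)
      have Y2: "Y (Suc t) = Y t" unfolding Ys using fvs by simp
      have "g * X (Suc t) \<le> bv ?s + (d + 2) * g * Y t + (if fu ?s then g else 0)"
        using IH(2) False gX by (simp add: min_def)
      also have "\<dots> \<le> min (bv (Suc ?s)) (d * g) + (d + 2) * g * Y (Suc t) + (if bv (Suc ?s) \<ge> d * g then g else 0)"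
        unfolding Y2 using r2 False g by (auto simp: min_def split: if_splits)
      finally show ?thesis unfolding e using nn by simp
    qed
  qed
  from main[of T] g have "g * X T \<le> d * g + (d + 2) * g * Y T + g"
    by (auto simp: min_def split: if_splits)
  then have "g * X T \<le> g * (d + 1 + (d + 2) * Y T)" by (simp add: algebra_simps)
  then have "X T \<le> d + 1 + (d + 2) * Y T" using g by simp
  then show ?thesis unfolding X_def Y_def .
qed



fun Cb :: "nat \<Rightarrow> nat \<Rightarrow> real" where
  "Cb N 0 = 0"
| "Cb N (Suc t) = real N + (real N + 1) * Cb N t"

lemma Cb_nonneg: "Cb N t \<ge> 0"
  by (induction t) auto

lemma Cb_mono: "t \<le> t' \<Longrightarrow> Cb N t \<le> Cb N t'"
proof (induction t' rule: dec_induct)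
  case base
  then show ?case by simp
next
  case (step m)
  have "Cb N m \<le> (real N + 1) * Cb N m" using Cb_nonneg[of N m] by (simp add: algebra_simps)
  then show ?case using step by simp
qed

lemma card_real_sum: "real (card {s \<in> W. P s}) = (\<Sum>s\<in>W. if P s then 1 else 0)" if "finite W"
proof -
  have "real (card {s \<in> W. P s}) = (\<Sum>s\<in>{s \<in> W. P s}. 1)" by simp
  also have "\<dots> = (\<Sum>s\<in>W. if P s then 1 else 0)" by (rule sum.inter_filter[OF that])
  finally show ?thesis .
qed

context wb
begin

lemma exists_T0: "\<exists>T0. \<forall>u\<in>{1..N}. \<forall>w\<in>{1..N}. \<exists>t\<le>T0. (u, w) \<in> E ^^ t"
proof -
  have "\<forall>x\<in>{1..N} \<times> {1..N}. \<exists>t. (fst x, snd x) \<in> E ^^ t"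
    using sc unfolding strongly_connected_def by (auto dest: rtrancl_imp_relpow)
  from bchoice[OF this] obtain f where f: "\<forall>x\<in>{1..N} \<times> {1..N}. (fst x, snd x) \<in> E ^^ f x" by blast
  have "\<forall>u\<in>{1..N}. \<forall>w\<in>{1..N}. \<exists>t\<le>sum f ({1..N} \<times> {1..N}). (u, w) \<in> E ^^ t"
  proof (intro ballI)
    fix u w assume "u \<in> {1..N}" "w \<in> {1..N}"
    then have m: "(u, w) \<in> {1..N} \<times> {1..N}" by simp
    then have "f (u, w) \<le> sum f ({1..N} \<times> {1..N})" by (intro member_le_sum) auto
    moreover have "(u, w) \<in> E ^^ f (u, w)" using f m by (metis fst_conv snd_conv)
    ultimately show "\<exists>t\<le>sum f ({1..N} \<times> {1..N}). (u, w) \<in> E ^^ t" by blast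
  qed
  then show ?thesis by blast
qed

lemma window:
  assumes T0: "\<forall>u\<in>{1..N}. \<forall>w\<in>{1..N}. \<exists>t\<le>T0. (u, w) \<in> E ^^ t"
    and gam: "\<forall>s\<in>{a..<a + T}. gamma s = g"
    and bg: "\<forall>s\<in>{a..<a + T}. big s"
    and nr: "\<forall>s\<in>{a..<a + T}. \<forall>i\<in>{1..N}. b E s i < 0 \<longrightarrow> (\<forall>j\<in>in_nbrs E i. \<not> fire s j)"
    and Tpos: "T > 0"
  shows "real T \<le> real N * Cb N T0"
proof -
  define Neg where "Neg = {w \<in> {1..N}. b E a w < 0}"
  have a_in: "a \<in> {a..<a + T}" using Tpos by simp
  obtain w0 where w0: "w0 \<in> Neg" using big_neg[of a] bg a_in unfolding Neg_def by blast
  have g: "g > 0" using gam a_in gamma_pos[of a] by force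
  have neg_const: "b E (a + t) w = b E a w" if w: "w \<in> Neg" and t: "t \<le> T" for w t
    using t
  proof (induction t)
    case 0
    then show ?case by simp
  next
    case (Suc t)
    then have IH: "b E (a + t) w = b E a w" by simp
    have sin: "a + t \<in> {a..<a + T}" using Suc by simp
    have wN: "w \<in> {1..N}" "b E a w < 0" using w unfolding Neg_def by auto
    have "{j \<in> in_nbrs E w. fire (a + t) j} = {}" using nr sin wN IH by auto
    then have c0: "card {j \<in> in_nbrs E w. fire (a + t) j} = 0" by (simp only: card.empty)
    have "\<not> fire (a + t) w" using not_fire_neg wN IH by simp
    then show ?case using b_Suc[of "a + t" w] IH c0 by simp
  qed
  have neg_in: "b E s w < 0" "\<not> fire s w" if wN: "w \<in> Neg" and sW: "s \<in> {a..<a + T}" for w s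
  proof -
    define t where "t = s - a"
    have "s = a + t" "t \<le> T" using sW unfolding t_def by auto
    then show "b E s w < 0" using neg_const[OF wN] wN unfolding Neg_def by auto
    then show "\<not> fire s w" by (rule not_fire_neg)
  qed
  define X where "X u = card {s \<in> {a..<a + T}. fire s u}" for u
  have bound: "\<forall>u\<in>{1..N}. \<forall>w\<in>Neg. (u, w) \<in> E ^^ t \<longrightarrow> real (X u) \<le> Cb N t" for t
  proof (induction t)
    case 0
    show ?case
    proof (intro ballI impI)
      fix u w assume "u \<in> {1..N}" "w \<in> Neg" "(u, w) \<in> E ^^ 0"
      then have uN: "u \<in> Neg" by simp
      have "\<not> fire s u" if "s \<in> {a..<a + T}" for s using neg_in(2)[OF uN that] .
      then have "{s \<in> {a..<a + T}. fire s u} = {}" by auto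
      then show "real (X u) \<le> Cb N 0" unfolding X_def by simp
    qed
  next
    case (Suc t)
    show ?case
    proof (intro ballI impI)
      fix u w assume u: "u \<in> {1..N}" and w: "w \<in> Neg" and p: "(u, w) \<in> E ^^ Suc t"
      obtain v where uv: "(u, v) \<in> E" and vw: "(v, w) \<in> E ^^ t" using relpow_Suc_D2[OF p] by blast
      have vN: "v \<in> {1..N}" using subsetD[OF Esub uv] by simp
      have uin: "u \<in> in_nbrs E v" using uv by (simp add: in_nbrs_def)
      show "real (X u) \<le> Cb N (Suc t)"
      proof (cases "v \<in> Neg")
        case True
        have "\<not> fire s u" if sW: "s \<in> {a..<a + T}" for s
          using nr[rule_format, OF sW vN neg_in(1)[OF True sW] uin] .
        then have "{s \<in> {a..<a + T}. fire s u} = {}" by auto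
        then have "X u = 0" unfolding X_def by (simp only: card.empty)
        then show ?thesis using Cb_nonneg[of N "Suc t"] by simp
      next
        case False
        then have v0: "b E a v \<ge> 0" using vN unfolding Neg_def by auto
        have IHv: "real (X v) \<le> Cb N t" using Suc.IH[rule_format, OF vN w vw] unfolding X_def .
        have ic: "real (card {s \<in> {a..<a + T}. fire s u}) \<le> real (out_deg E v) + 1 + (real (out_deg E v) + 2) * real (card {s \<in> {a..<a + T}. fire s v})"
        proof (rule inv_count[where bv = "\<lambda>s. b E s v" and g = g])
          show "g > 0" by (rule g)
          show "real (out_deg E v) \<ge> 0" by simp
          show "b E a v \<ge> 0" by (rule v0)
          fix s assume s: "a \<le> s" "s < a + T"
          then have gs: "gamma s = g" using gam by simp
          show "fire s v \<longleftrightarrow> b E s v \<ge> real (out_deg E v) * g" unfolding fire_def gs ..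
          have "(if fire s u then g else 0) \<le> gamma s * real (card {j \<in> in_nbrs E v. fire s j})"
          proof (cases "fire s u")
            case True
            then have "u \<in> {j \<in> in_nbrs E v. fire s j}" using uin by simp
            moreover have "finite {j \<in> in_nbrs E v. fire s j}" using fin_in[of v] by simp
            ultimately have "card {j \<in> in_nbrs E v. fire s j} > 0" using card_gt_0_iff by blast
            then show ?thesis using True gs g by simp
          next
            case False
            then show ?thesis using card_ge0 by simp
          qed
          then show "b E (Suc s) v \<ge> b E s v - (if fire s v then real (out_deg E v) * g else 0) + (if fire s u then g else 0)"
            using b_Suc[of s v] gs by simp
        qed
        have d1: "real (out_deg E v) \<le> real N - 1" by (rule deg_le)
        have "(real (out_deg E v) + 2) * real (X v) \<le> (real N + 1) * Cb N t"
          using d1 IHv by (intro mult_mono) auto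
        then show ?thesis using ic d1 unfolding X_def by simp
      qed
    qed
  qed
  have Xb: "real (X u) \<le> Cb N T0" if u: "u \<in> {1..N}" for u
  proof -
    have "w0 \<in> {1..N}" using w0 unfolding Neg_def by simp
    then obtain t where "t \<le> T0" "(u, w0) \<in> E ^^ t" using T0 u by blast
    then have "real (X u) \<le> Cb N t" using bound[of t] u w0 by blast
    also have "\<dots> \<le> Cb N T0" using Cb_mono \<open>t \<le> T0\<close> by blast
    finally show ?thesis .
  qed
  have "real T = (\<Sum>s\<in>{a..<a + T}. (1::real))" by simp
  also have "\<dots> \<le> (\<Sum>s\<in>{a..<a + T}. \<Sum>u\<in>{1..N}. if fire s u then 1 else 0)"
  proof (rule sum_mono)
    fix s assume s: "s \<in> {a..<a + T}"
    then obtain u where u: "u \<in> {1..N}" "fire s u" using big_fire bg by blast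
    have "(if fire s u then 1 else 0) \<le> (\<Sum>u\<in>{1..N}. if fire s u then 1 else (0::real))"
      by (rule member_le_sum) (use u in auto)
    then show "1 \<le> (\<Sum>u\<in>{1..N}. if fire s u then 1 else (0::real))" using u by simp
  qed
  also have "\<dots> = (\<Sum>u\<in>{1..N}. \<Sum>s\<in>{a..<a + T}. if fire s u then 1 else 0)" by (rule sum.swap)
  also have "\<dots> = (\<Sum>u\<in>{1..N}. real (X u))" unfolding X_def by (rule sum.cong[OF refl], rule card_real_sum[symmetric], simp)
  also have "\<dots> \<le> (\<Sum>u\<in>{1..N}. Cb N T0)" by (rule sum_mono) (rule Xb)
  also have "\<dots> = real N * Cb N T0" by simp
  finally show ?thesis .
qed

end


context wb
begin

definition noreceipt :: "nat \<Rightarrow> bool" where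
  "noreceipt s \<longleftrightarrow> (\<forall>i\<in>{1..N}. b E s i < 0 \<longrightarrow> (\<forall>j\<in>in_nbrs E i. \<not> fire s j))"

lemma exists_M: "\<exists>M. \<forall>a T g. (\<forall>s\<in>{a..<a + T}. gamma s = g) \<and> (\<forall>s\<in>{a..<a + T}. big s)
   \<and> (\<forall>s\<in>{a..<a + T}. noreceipt s) \<and> T > 0 \<longrightarrow> real T \<le> M"
proof -
  obtain T0 where T0: "\<forall>u\<in>{1..N}. \<forall>w\<in>{1..N}. \<exists>t\<le>T0. (u, w) \<in> E ^^ t" using exists_T0 by blast
  show ?thesis
    by (rule exI[of _ "real N * Cb N T0"]) (auto intro: window[OF T0] simp: noreceipt_def)
qed

lemma drop:
  assumes M: "\<forall>a T g. (\<forall>s\<in>{a..<a + T}. gamma s = g) \<and> (\<forall>s\<in>{a..<a + T}. big s)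
   \<and> (\<forall>s\<in>{a..<a + T}. noreceipt s) \<and> T > 0 \<longrightarrow> real T \<le> M"
    and L: "real L > M" "L > 0"
  shows "(\<forall>s\<in>{a..<a + q * L}. gamma s = g \<and> big s) \<Longrightarrow> Phi (a + q * L) \<le> Phi a - real q * g"
proof (induction q)
  case 0
  then show ?case by simp
next
  case (Suc q)
  have sub: "{a..<a + q * L} \<subseteq> {a..<a + Suc q * L}" by auto
  have IH: "Phi (a + q * L) \<le> Phi a - real q * g" using Suc sub by blast
  let ?c = "a + q * L"
  have W: "{?c..<?c + L} \<subseteq> {a..<a + Suc q * L}" by auto
  have gW: "\<forall>s\<in>{?c..<?c + L}. gamma s = g" and bW: "\<forall>s\<in>{?c..<?c + L}. big s"
    using Suc.prems W by blast+
  have "\<not> (\<forall>s\<in>{?c..<?c + L}. noreceipt s)"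
  proof
    assume "\<forall>s\<in>{?c..<?c + L}. noreceipt s"
    then have "real L \<le> M" using M gW bW L(2) by blast
    then show False using L(1) by simp
  qed
  then obtain s i j where s: "s \<in> {?c..<?c + L}" and i: "i \<in> {1..N}" "b E s i < 0"
    and j: "j \<in> in_nbrs E i" "fire s j"
    unfolding noreceipt_def by blast
  have "Phi (Suc s) \<le> Phi s - gamma s" by (rule receipt[OF i j])
  moreover have "gamma s = g" using gW s by blast
  moreover have "Phi (a + Suc q * L) \<le> Phi (Suc s)" using s by (intro Phi_mono) simp
  moreover have "Phi s \<le> Phi ?c" using s by (intro Phi_mono) simp
  ultimately have "Phi (a + Suc q * L) \<le> Phi a - real q * g - g" using IH by linarith
  then show ?case by (simp add: algebra_simps)
qed

lemma Phi_nonneg: "Phi k \<ge> 0"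
  unfolding Phi_def by (rule sum_nonneg) simp

lemma main: "\<exists>k1\<ge>k. eps_norm1 N E k1 < 2 * real N * (real N - 1) * gamma k1"
proof (rule ccontr)
  assume "\<not> ?thesis"
  then have bigk: "\<forall>k1\<ge>k. big k1" unfolding big_def by (auto simp: not_less)
  obtain M where M: "\<forall>a T g. (\<forall>s\<in>{a..<a + T}. gamma s = g) \<and> (\<forall>s\<in>{a..<a + T}. big s)
   \<and> (\<forall>s\<in>{a..<a + T}. noreceipt s) \<and> T > 0 \<longrightarrow> real T \<le> M" using exists_M by blast
  obtain m where m: "M < (2::real) ^ m" using real_arch_pow[of 2 M] by auto
  define L :: nat where "L = 2 ^ m"
  have L: "real L > M" "L > 0" using m unfolding L_def by auto
  define n0 where "n0 = m + k"
  have blk: "Phi (2 ^ Suc n - 1) \<le> Phi (2 ^ n - 1) - 1 / 2 ^ m" if n: "n \<ge> n0" for n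
  proof -
    define q :: nat where "q = 2 ^ (n - m)"
    have qL: "q * L = 2 ^ n" unfolding q_def L_def using n n0_def by (simp add: power_add[symmetric])
    have kn: "k \<le> 2 ^ n - 1" using less_exp[of n] n n0_def by linarith
    have e: "2 ^ n - 1 + q * L = 2 ^ Suc n - 1" unfolding qL by simp
    have hyp: "\<forall>s\<in>{2 ^ n - 1..<2 ^ n - 1 + q * L}. gamma s = 1 / 2 ^ n \<and> big s"
    proof
      fix s assume s: "s \<in> {2 ^ n - 1..<2 ^ n - 1 + q * L}"
      then have "gamma s = 1 / 2 ^ n" using gamma_block[of n s] e by simp
      moreover have "big s" using bigk s kn by simp
      ultimately show "gamma s = 1 / 2 ^ n \<and> big s" by simp
    qed
    have "Phi (2 ^ n - 1 + q * L) \<le> Phi (2 ^ n - 1) - real q * (1 / 2 ^ n)"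
      by (rule drop[OF M L hyp])
    moreover have "real q * (1 / 2 ^ n) = 1 / 2 ^ m"
    proof -
      have "(2::real) ^ n = 2 ^ (n - m) * 2 ^ m" using n n0_def by (simp add: power_add[symmetric])
      then show ?thesis unfolding q_def by simp
    qed
    ultimately show ?thesis using e by simp
  qed
  have iter: "Phi (2 ^ (n0 + j) - 1) \<le> Phi (2 ^ n0 - 1) - real j / 2 ^ m" for j
  proof (induction j)
    case 0
    then show ?case by simp
  next
    case (Suc j)
    have "Phi (2 ^ Suc (n0 + j) - 1) \<le> Phi (2 ^ (n0 + j) - 1) - 1 / 2 ^ m" by (rule blk) simp
    then show ?case using Suc by (simp add: add_divide_distrib)
  qed
  obtain j :: nat where j: "Phi (2 ^ n0 - 1) * 2 ^ m < real j" using reals_Archimedean2 by blast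
  have "Phi (2 ^ n0 - 1) < real j / 2 ^ m" using j by (simp add: field_simps)
  then have "Phi (2 ^ (n0 + j) - 1) < 0" using iter[of j] by simp
  then show False using Phi_nonneg by (metis not_less)
qed

end

theorem lemma6:
  fixes N :: nat and E :: "(nat \<times> nat) set"
  assumes "N \<ge> 2"
    and "E \<subseteq> {1..N} \<times> {1..N}"
    and "\<forall>i. (i, i) \<notin> E"
    and "strongly_connected N E"
  shows "\<forall>k. \<exists>k1\<ge>k. eps_norm1 N E k1 < 2 * real N * (real N - 1) * gamma k1"
proof -
  interpret wb N E using assms by unfold_locales
  show ?thesis using main by blast
qed


end
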